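(* Let $G$ be a loop-tangle graph and let $R$ be the disc bounded by the loop, containing the tangle graph. For each positive integer $N$ let $f_N$ be the number of $N$-sided faces of $G$ in $R$. Then \[3f_1 + 2f_2 + f_3 = 3 + \sum_{n=1}^{\infty} n f_{n+4}.\]
   Context: In an oriented knot diagram, a loop is a subarc $\gamma^\dagger$ of the knot such that (1) $\gamma^\dagger$ has exactly one self-crossing $u$, forming a loop bounding a disc $R$; (2) apart from $u$, at every crossing $\gamma^\dagger$ meets, $\gamma^\dagger$ is the under-strand (or at every such crossing it is the over-strand); (3) the two edges incident to $u$ not on the loop lie outside $R$. The tangle consists of the arcs of the knot inside $R$, each crossing the loop transversally at its two endpoints. The loop-tangle graph is obtained from the loop together with the tangle by forgetting over/under information: its vertices are the self-crossing $u$, the crossings of tangle arcs with the loop, and the crossings of the tangle inside $R$, each of degree $4$; it also contains the outward edges (sprouts) leaving the loop, each attached to a single vertex on the loop. An $N$-sided face is a face of this graph inside $R$ whose boundary consists of $N$ edges. *)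

theory Defs
  imports Complex_Main
begin

text \<open>A map is a finite set of darts D with a
fixed-point-free involution alpha (edges) and a permutation sigma (cyclic order of darts
around each vertex).\<close>

definition orb :: "('d \<Rightarrow> 'd) \<Rightarrow> 'd \<Rightarrow> 'd set" where
  "orb f d = range (\<lambda>n. (f ^^ n) d)"

definition is_map :: "'d set \<Rightarrow> ('d \<Rightarrow> 'd) \<Rightarrow> ('d \<Rightarrow> 'd) \<Rightarrow> bool" where
  "is_map D \<alpha> \<sigma> \<longleftrightarrow> finite D \<and> bij_betw \<alpha> D D \<and> bij_betw \<sigma> D D \<and>
     (\<forall>d\<in>D. \<alpha> d \<noteq> d \<and> \<alpha> (\<alpha> d) = d)"

definition map_vertices :: "'d set \<Rightarrow> ('d \<Rightarrow> 'd) \<Rightarrow> ('d \<Rightarrow> 'd) \<Rightarrow> 'd set set" where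
  "map_vertices D \<alpha> \<sigma> = orb \<sigma> ` D"

definition map_edges :: "'d set \<Rightarrow> ('d \<Rightarrow> 'd) \<Rightarrow> ('d \<Rightarrow> 'd) \<Rightarrow> 'd set set" where
  "map_edges D \<alpha> \<sigma> = orb \<alpha> ` D"

definition map_faces :: "'d set \<Rightarrow> ('d \<Rightarrow> 'd) \<Rightarrow> ('d \<Rightarrow> 'd) \<Rightarrow> 'd set set" where
  "map_faces D \<alpha> \<sigma> = orb (\<sigma> \<circ> \<alpha>) ` D"

definition map_connected :: "'d set \<Rightarrow> ('d \<Rightarrow> 'd) \<Rightarrow> ('d \<Rightarrow> 'd) \<Rightarrow> bool" where
  "map_connected D \<alpha> \<sigma> \<longleftrightarrow>
     (\<forall>d\<in>D. \<forall>e\<in>D. (d, e) \<in> {(x, y). x \<in> D \<and> (y = \<alpha> x \<or> y = \<sigma> x)}\<^sup>*)"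

definition planar_map :: "'d set \<Rightarrow> ('d \<Rightarrow> 'd) \<Rightarrow> ('d \<Rightarrow> 'd) \<Rightarrow> bool" where
  "planar_map D \<alpha> \<sigma> \<longleftrightarrow> is_map D \<alpha> \<sigma> \<and> map_connected D \<alpha> \<sigma> \<and>
     int (card (map_vertices D \<alpha> \<sigma>)) - int (card (map_edges D \<alpha> \<sigma>))
       + int (card (map_faces D \<alpha> \<sigma>)) = 2"

text \<open>Sprout darts: the darts (at loop vertices) of the outward edges. The sprouts are
modelled as pendant edges ending in a leaf (a vertex of degree 1). \<open>ls\<close> lists the darts
of the loop edges in order along the loop, starting at the self-crossing u;
p and q are the darts at u of the two sprouts at u.\<close>

definition sprout_darts :: "('d \<Rightarrow> 'd) \<Rightarrow> 'd list \<Rightarrow> 'd \<Rightarrow> 'd \<Rightarrow> 'd set" where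
  "sprout_darts \<sigma> ls p q = {p, q} \<union> {\<sigma> (ls ! i) | i. 1 \<le> i \<and> i < length ls}"

definition loop_tangle_map ::
  "'d set \<Rightarrow> ('d \<Rightarrow> 'd) \<Rightarrow> ('d \<Rightarrow> 'd) \<Rightarrow> 'd list \<Rightarrow> 'd \<Rightarrow> 'd \<Rightarrow> bool" where
  "loop_tangle_map D \<alpha> \<sigma> ls p q \<longleftrightarrow>
     planar_map D \<alpha> \<sigma> \<and>
     ls \<noteq> [] \<and> set ls \<subseteq> D \<and> p \<in> D \<and> q \<in> D \<and>
     \<comment> \<open>every vertex is a 4-valent crossing or a leaf (free end of a sprout)\<close>
     (\<forall>d\<in>D. card (orb \<sigma> d) = 1 \<or> card (orb \<sigma> d) = 4) \<and>
     \<comment> \<open>the self-crossing u: the loop leaves along hd ls and returns along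
         alpha (last ls); these are adjacent (on the side of R); the other two
         edges at u are sprouts p, q lying outside R\<close>
     distinct [\<alpha> (last ls), hd ls, p, q] \<and>
     \<sigma> (\<alpha> (last ls)) = hd ls \<and> \<sigma> (hd ls) = p \<and> \<sigma> p = q \<and> \<sigma> q = \<alpha> (last ls) \<and>
     \<sigma> (\<alpha> p) = \<alpha> p \<and> \<sigma> (\<alpha> q) = \<alpha> q \<and>
     \<comment> \<open>the other loop vertices: the loop crosses straight through; one further
         edge goes into R (tangle), the other is a sprout going out\<close>
     (\<forall>i. 1 \<le> i \<and> i < length ls \<longrightarrow>
        (let a = \<alpha> (ls ! (i - 1)) in
          distinct [a, \<sigma> a, \<sigma> (\<sigma> a), \<sigma> (\<sigma> (\<sigma> a))] \<and>
          \<sigma> (\<sigma> a) = ls ! i \<and> \<sigma> (\<sigma> (\<sigma> (\<sigma> a))) = a \<and>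
          \<sigma> (\<alpha> (\<sigma> (ls ! i))) = \<alpha> (\<sigma> (ls ! i)))) \<and>
     \<comment> \<open>the loop has only one self-crossing: its vertices are pairwise distinct\<close>
     (\<forall>i < length ls. \<forall>j < length ls. i \<noteq> j \<longrightarrow> ls ! j \<notin> orb \<sigma> (ls ! i)) \<and>
     \<comment> \<open>the only leaves are the free ends of the sprouts\<close>
     (\<forall>d\<in>D. \<sigma> d = d \<longrightarrow> \<alpha> d \<in> sprout_darts \<sigma> ls p q)"

text \<open>Faces inside the disc R: all faces not containing a sprout dart (the unique
face containing the sprouts is the exterior of R). The number of N-sided faces in R.\<close>

definition faces_in_R :: "'d set \<Rightarrow> ('d \<Rightarrow> 'd) \<Rightarrow> ('d \<Rightarrow> 'd) \<Rightarrow> 'd list \<Rightarrow> 'd \<Rightarrow> 'd \<Rightarrow> 'd set set" where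
  "faces_in_R D \<alpha> \<sigma> ls p q =
     {F \<in> map_faces D \<alpha> \<sigma>. F \<inter> sprout_darts \<sigma> ls p q = {}}"

definition nsided_faces :: "'d set \<Rightarrow> ('d \<Rightarrow> 'd) \<Rightarrow> ('d \<Rightarrow> 'd) \<Rightarrow> 'd list \<Rightarrow> 'd \<Rightarrow> 'd \<Rightarrow> nat \<Rightarrow> nat" where
  "nsided_faces D \<alpha> \<sigma> ls p q N = card {F \<in> faces_in_R D \<alpha> \<sigma> ls p q. card F = N}"

end

theory Submission
  imports Defs
begin


lemma funpow_in: "bij_betw f D D \<Longrightarrow> x \<in> D \<Longrightarrow> (f^^n) x \<in> D"
  by (induction n) (auto simp: bij_betw_def)

lemma funpow_cancel:
  assumes "bij_betw f D D" "x \<in> D" "y \<in> D" "(f^^n) x = (f^^n) y"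
  shows "x = y"
  using assms(4)
proof (induction n)
  case 0 then show ?case by simp
next
  case (Suc n)
  have "f ((f^^n) x) = f ((f^^n) y)" using Suc.prems by simp
  moreover have "(f^^n) x \<in> D" "(f^^n) y \<in> D" using funpow_in assms by metis+
  ultimately have "(f^^n) x = (f^^n) y" using assms(1) unfolding bij_betw_def inj_on_def by blast
  then show ?case using Suc.IH by blast
qed

lemma funpow_period:
  assumes "finite D" "bij_betw f D D" "x \<in> D"
  shows "\<exists>m>0. (f^^m) x = x"
proof -
  have "range (\<lambda>n. (f^^n) x) \<subseteq> D" using funpow_in[OF assms(2,3)] by blast
  hence "finite (range (\<lambda>n. (f^^n) x))" using assms(1) finite_subset by blast
  hence "\<not> inj (\<lambda>n. (f^^n) x)"
    using finite_imageD[of "\<lambda>n. (f^^n) x" UNIV] infinite_UNIV_nat by blast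
  then obtain i j where ij0: "i \<noteq> j" "(f^^i) x = (f^^j) x" unfolding inj_def by blast
  obtain i j where ij: "i < j" "(f^^i) x = (f^^j) x"
  proof (cases "i < j")
    case True then show ?thesis using ij0 that by blast
  next
    case False then have "j < i" using ij0(1) by simp
    then show ?thesis using ij0 that[of j i] by simp
  qed
  have "j = i + (j - i)" using ij(1) by simp
  hence "(f^^j) x = (f^^(i + (j-i))) x" by metis
  hence "(f^^j) x = (f^^i) ((f^^(j-i)) x)" by (simp only: funpow_add comp_apply)
  hence "(f^^i) x = (f^^i) ((f^^(j-i)) x)" using ij(2) by simp
  hence "x = (f^^(j-i)) x" using funpow_cancel[OF assms(2) assms(3) funpow_in[OF assms(2,3)]] by blast
  thus ?thesis using ij(1) by (intro exI[of _ "j-i"]) auto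
qed

lemma orb_mem: "y \<in> orb f x \<longleftrightarrow> (\<exists>n. y = (f^^n) x)"
  unfolding orb_def by auto

lemma orb_self: "x \<in> orb f x"
  unfolding orb_mem by (metis funpow_0)

lemma orb_step: "y \<in> orb f x \<Longrightarrow> f y \<in> orb f x"
  unfolding orb_mem by (metis comp_apply funpow.simps(2))

lemma orb_trans: "y \<in> orb f x \<Longrightarrow> orb f y \<subseteq> orb f x"
proof
  fix z assume "y \<in> orb f x" "z \<in> orb f y"
  then obtain n m where "y = (f^^n) x" "z = (f^^m) y" unfolding orb_mem by blast
  hence "z = (f^^(m+n)) x" by (simp add: funpow_add)
  thus "z \<in> orb f x" unfolding orb_mem by blast
qed

lemma funpow_mult_period: "(f^^m) x = x \<Longrightarrow> (f^^(m*c)) x = x"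
proof (induction c)
  case 0 then show ?case by simp
next
  case (Suc c)
  have "m * Suc c = m + m * c" by simp
  hence "(f^^(m * Suc c)) x = (f^^m) ((f^^(m*c)) x)" by (simp only: funpow_add comp_apply)
  then show ?case using Suc by simp
qed

lemma orb_sym:
  assumes "finite D" "bij_betw f D D" "x \<in> D" "y \<in> orb f x"
  shows "x \<in> orb f y"
proof -
  obtain m where m: "m > 0" "(f^^m) x = x" using funpow_period[OF assms(1-3)] by blast
  obtain n where n: "y = (f^^n) x" using assms(4) unfolding orb_mem by blast
  have "m * (n+1) \<ge> 1 * (n+1)" using m(1) by (intro mult_le_mono1) simp
  moreover have "n \<le> 1 * (n+1)" by simp
  ultimately have "m * (n+1) \<ge> n" by (rule le_trans[rotated])
  hence e: "(m*(n+1) - n) + n = m*(n+1)" by simp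
  have "(f^^(m*(n+1) - n)) y = (f^^((m*(n+1) - n) + n)) x"
    using n by (simp only: funpow_add comp_apply)
  also have "\<dots> = (f^^(m*(n+1))) x" by (simp only: e)
  also have "\<dots> = x" by (rule funpow_mult_period[OF m(2)])
  finally have "x = (f^^(m*(n+1) - n)) y" by (rule sym)
  thus ?thesis unfolding orb_mem by blast
qed

lemma orb_eq:
  assumes "finite D" "bij_betw f D D" "x \<in> D" "y \<in> orb f x"
  shows "orb f y = orb f x"
  using orb_trans[OF assms(4)] orb_trans[OF orb_sym[OF assms]] by (rule equalityI)

lemma orb_subD: "bij_betw f D D \<Longrightarrow> x \<in> D \<Longrightarrow> orb f x \<subseteq> D"
proof
  fix y assume "bij_betw f D D" "x \<in> D" "y \<in> orb f x"
  then obtain n where "y = (f^^n) x" unfolding orb_mem by blast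
  thus "y \<in> D" using funpow_in[OF \<open>bij_betw f D D\<close> \<open>x \<in> D\<close>] by simp
qed

lemma orb_sum_card:
  assumes "finite D" "bij_betw f D D"
  shows "(\<Sum>X\<in>orb f ` D. card X) = card D"
proof -
  have U: "\<Union>(orb f ` D) = D"
  proof
    show "\<Union>(orb f ` D) \<subseteq> D" using orb_subD[OF assms(2)] by (simp add: UN_least)
    show "D \<subseteq> \<Union>(orb f ` D)"
    proof
      fix x assume "x \<in> D" thus "x \<in> \<Union>(orb f ` D)" using orb_self[of x f] by blast
    qed
  qed
  have "pairwise disjnt (orb f ` D)"
    unfolding pairwise_def disjnt_def
  proof (intro ballI impI)
    fix A B assume "A \<in> orb f ` D" "B \<in> orb f ` D" "A \<noteq> B"
    then obtain a b where ab: "a \<in> D" "b \<in> D" "A = orb f a" "B = orb f b" by blast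
    show "A \<inter> B = {}"
    proof (rule ccontr)
      assume "A \<inter> B \<noteq> {}"
      then obtain c where "c \<in> orb f a" "c \<in> orb f b" using ab by blast
      hence "orb f c = orb f a" "orb f c = orb f b"
        using orb_eq[OF assms ab(1)] orb_eq[OF assms ab(2)] by blast+
      thus False using ab(3,4) \<open>A \<noteq> B\<close> by simp
    qed
  qed
  moreover have "finite A" if hA: "A \<in> orb f ` D" for A
  proof -
    obtain a where "a \<in> D" "A = orb f a" using hA by blast
    thus ?thesis using orb_subD[OF assms(2)] assms(1) by (metis finite_subset)
  qed
  ultimately have "card (\<Union>(orb f ` D)) = sum card (orb f ` D)" by (rule card_Union_disjoint)
  thus ?thesis using U by simp
qed


lemma final_conv:
  fixes A :: "'a set" and c :: "'a \<Rightarrow> nat"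
  assumes fA: "finite A" and bnd: "\<And>F. F \<in> A \<Longrightarrow> 1 \<le> c F \<and> c F \<le> B"
    and s3: "(\<Sum>F\<in>A. 4 - real (c F)) = 3"
  defines "f \<equiv> \<lambda>N. real (card {F\<in>A. c F = N})"
  shows "3 * f 1 + 2 * f 2 + f 3 = 3 + (\<Sum>n. real (n + 1) * f (n + 1 + 4))"
proof -
  have key: "(\<Sum>F\<in>A. h (c F)) = (\<Sum>N<B+5. h N * f N)" for h :: "nat \<Rightarrow> real"
  proof -
    have "(\<Sum>F\<in>A. h (c F)) = (\<Sum>F\<in>A. \<Sum>N<B+5. (if c F = N then h N else 0))"
    proof (rule sum.cong[OF refl])
      fix F assume "F \<in> A"
      hence "c F \<in> {..<B+5}" using bnd by fastforce
      thus "h (c F) = (\<Sum>N<B+5. (if c F = N then h N else 0))" by simp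
    qed
    also have "\<dots> = (\<Sum>N<B+5. \<Sum>F\<in>A. (if c F = N then h N else 0))" by (rule sum.swap)
    also have "\<dots> = (\<Sum>N<B+5. h N * f N)"
    proof (rule sum.cong[OF refl])
      fix N
      have "(\<Sum>F\<in>A. (if c F = N then h N else 0)) = (\<Sum>F\<in>{F\<in>A. c F = N}. h N)"
        using sum.inter_filter[OF fA, of "\<lambda>_. h N" "\<lambda>F. c F = N"] by simp
      also have "\<dots> = h N * f N" unfolding f_def by simp
      finally show "(\<Sum>F\<in>A. (if c F = N then h N else 0)) = h N * f N" .
    qed
    finally show ?thesis .
  qed
  have split: "(\<Sum>N<n+5. g N) = g 0 + g 1 + g 2 + g 3 + g 4 + (\<Sum>m<n. g (m + 5))" for n and g :: "nat \<Rightarrow> real"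
  proof (induction n)
    case 0 then show ?case by (simp add: numeral_eq_Suc)
  next
    case (Suc n)
    have "Suc n + 5 = Suc (n+5)" by simp
    hence "(\<Sum>N<Suc n+5. g N) = (\<Sum>N<n+5. g N) + g (n+5)" by (simp only: sum.lessThan_Suc)
    then show ?case using Suc by simp
  qed
  have f0: "f 0 = 0"
  proof -
    have e: "{F\<in>A. c F = 0} = {}" using bnd by fastforce
    show ?thesis unfolding f_def e by simp
  qed
  have fbig: "f N = 0" if hN: "N > B" for N
  proof -
    have e: "{F\<in>A. c F = N} = {}" using bnd hN by fastforce
    show ?thesis unfolding f_def e by simp
  qed
  have "3 = (\<Sum>N<B+5. (4 - real N) * f N)" using s3 key[of "\<lambda>N. 4 - real N"] by simp
  also have "\<dots> = 4 * f 0 + 3 * f 1 + 2 * f 2 + f 3 + 0 * f 4 + (\<Sum>m<B. (4 - real (m+5)) * f (m+5))"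
    by (simp add: split)
  also have "(\<Sum>m<B. (4 - real (m+5)) * f (m+5)) = - (\<Sum>m<B. real (m + 1) * f (m + 1 + 4))"
    by (simp add: sum_negf[symmetric] algebra_simps)
  finally have eq: "3 = 3 * f 1 + 2 * f 2 + f 3 - (\<Sum>m<B. real (m + 1) * f (m + 1 + 4))"
    using f0 by simp
  have "(\<Sum>n. real (n + 1) * f (n + 1 + 4)) = (\<Sum>m<B. real (m + 1) * f (m + 1 + 4))"
    by (rule suminf_finite) (auto simp: fbig)
  thus ?thesis using eq by simp
qed



lemma arith_aux: "(x::real) = 4*i - s \<Longrightarrow> v - e + ff = 2 \<Longrightarrow> s + (3*kk+2) = n \<Longrightarrow> ff = i + 1
   \<Longrightarrow> 2*e = n \<Longrightarrow> 4*v = n + 3*(kk+1) \<Longrightarrow> x = 3" by argo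

lemma arith_aux2: "(n::nat) = a4 + b \<Longrightarrow> a4 = 4 * a \<Longrightarrow> V = a + b \<Longrightarrow> b = kk + 1 \<Longrightarrow> 4 * V = n + 3 * (kk + 1)"
  by simp

locale LT =
  fixes D :: "'d set" and \<alpha> \<sigma> :: "'d \<Rightarrow> 'd" and ls :: "'d list" and p q :: 'd
  assumes ltm: "loop_tangle_map D \<alpha> \<sigma> ls p q"
begin

abbreviation "k \<equiv> length ls"
abbreviation "S \<equiv> sprout_darts \<sigma> ls p q"

lemma fin: "finite D" using ltm unfolding loop_tangle_map_def planar_map_def is_map_def by blast
lemma bja: "bij_betw \<alpha> D D" using ltm unfolding loop_tangle_map_def planar_map_def is_map_def by blast
lemma bjs: "bij_betw \<sigma> D D" using ltm unfolding loop_tangle_map_def planar_map_def is_map_def by blast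
lemma aD: "d \<in> D \<Longrightarrow> \<alpha> d \<in> D" using bja bij_betwE by blast
lemma sD: "d \<in> D \<Longrightarrow> \<sigma> d \<in> D" using bjs bij_betwE by blast
lemma aa: "d \<in> D \<Longrightarrow> \<alpha> (\<alpha> d) = d" using ltm unfolding loop_tangle_map_def planar_map_def is_map_def by blast
lemma anf: "d \<in> D \<Longrightarrow> \<alpha> d \<noteq> d" using ltm unfolding loop_tangle_map_def planar_map_def is_map_def by blast
lemma euler: "int (card (map_vertices D \<alpha> \<sigma>)) - int (card (map_edges D \<alpha> \<sigma>))
       + int (card (map_faces D \<alpha> \<sigma>)) = 2"
  using ltm unfolding loop_tangle_map_def planar_map_def by blast
lemma ne: "ls \<noteq> []" using ltm unfolding loop_tangle_map_def by blast
lemma lsD: "set ls \<subseteq> D" using ltm unfolding loop_tangle_map_def by blast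
lemma pD: "p \<in> D" using ltm unfolding loop_tangle_map_def by blast
lemma qD: "q \<in> D" using ltm unfolding loop_tangle_map_def by blast
lemma deg: "d \<in> D \<Longrightarrow> card (orb \<sigma> d) = 1 \<or> card (orb \<sigma> d) = 4"
  using ltm unfolding loop_tangle_map_def by blast
lemma u: "distinct [\<alpha> (last ls), hd ls, p, q]" "\<sigma> (\<alpha> (last ls)) = hd ls" "\<sigma> (hd ls) = p"
  "\<sigma> p = q" "\<sigma> q = \<alpha> (last ls)" "\<sigma> (\<alpha> p) = \<alpha> p" "\<sigma> (\<alpha> q) = \<alpha> q"
  using ltm unfolding loop_tangle_map_def by blast+
lemma vtx:
  assumes "1 \<le> i" "i < k"
  shows "distinct [\<alpha> (ls!(i-1)), \<sigma> (\<alpha> (ls!(i-1))), \<sigma> (\<sigma> (\<alpha> (ls!(i-1)))), \<sigma> (\<sigma> (\<sigma> (\<alpha> (ls!(i-1)))))]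
     \<and> \<sigma> (\<sigma> (\<alpha> (ls!(i-1)))) = ls ! i \<and> \<sigma> (\<sigma> (\<sigma> (\<sigma> (\<alpha> (ls!(i-1)))))) = \<alpha> (ls!(i-1))
     \<and> \<sigma> (\<alpha> (\<sigma> (ls ! i))) = \<alpha> (\<sigma> (ls ! i))"
proof -
  have "\<forall>i. 1 \<le> i \<and> i < length ls \<longrightarrow>
        (let a = \<alpha> (ls ! (i - 1)) in
          distinct [a, \<sigma> a, \<sigma> (\<sigma> a), \<sigma> (\<sigma> (\<sigma> a))] \<and>
          \<sigma> (\<sigma> a) = ls ! i \<and> \<sigma> (\<sigma> (\<sigma> (\<sigma> a))) = a \<and>
          \<sigma> (\<alpha> (\<sigma> (ls ! i))) = \<alpha> (\<sigma> (ls ! i)))"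
    using ltm unfolding loop_tangle_map_def by blast
  thus ?thesis using assms unfolding Let_def by blast
qed
lemma sepo: "i < k \<Longrightarrow> j < k \<Longrightarrow> i \<noteq> j \<Longrightarrow> ls ! j \<notin> orb \<sigma> (ls ! i)"
  using ltm unfolding loop_tangle_map_def by blast
lemma leaf: "d \<in> D \<Longrightarrow> \<sigma> d = d \<Longrightarrow> \<alpha> d \<in> S"
  using ltm unfolding loop_tangle_map_def by blast


lemma kpos: "k \<ge> 1" using ne by (cases ls) auto
lemma lsnD: "i < k \<Longrightarrow> ls ! i \<in> D" using lsD nth_mem by blast
lemma hd0: "hd ls = ls ! 0" using ne by (simp add: hd_conv_nth)
lemma last0: "last ls = ls ! (k - 1)" using ne by (simp add: last_conv_nth)

lemma sepm:
  assumes "i < k" "j < k" "(\<sigma>^^m) (ls!i) = (\<sigma>^^m') (ls!j)"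
  shows "i = j"
proof (rule ccontr)
  assume ij: "i \<noteq> j"
  let ?z = "(\<sigma>^^m') (ls!j)"
  have z1: "?z \<in> orb \<sigma> (ls!j)" unfolding orb_mem by blast
  have z2: "?z \<in> orb \<sigma> (ls!i)" unfolding orb_mem using assms(3) by metis
  have "ls!j \<in> orb \<sigma> ?z" by (rule orb_sym[OF fin bjs lsnD[OF assms(2)] z1])
  hence "ls!j \<in> orb \<sigma> (ls!i)" using orb_trans[OF z2] by blast
  thus False using sepo[OF assms(1,2) ij] by blast
qed

lemma s1: "(\<sigma>^^Suc 0) x = \<sigma> x" by simp
lemma s2: "(\<sigma>^^Suc (Suc 0)) x = \<sigma> (\<sigma> x)" by simp
lemma s3: "(\<sigma>^^Suc (Suc (Suc 0))) x = \<sigma> (\<sigma> (\<sigma> x))" by simp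
lemma s0: "(\<sigma>^^0) x = x" by simp

lemma pS: "p = \<sigma> (ls!0)" using u(3) hd0 by simp
lemma qS: "q = \<sigma> (\<sigma> (ls!0))" using u(3,4) hd0 by simp
lemma lastS: "\<alpha> (ls!(k-1)) = \<sigma> (\<sigma> (\<sigma> (ls!0)))" using u(3,4,5) hd0 last0 by simp

lemma vA: "1 \<le> i \<Longrightarrow> i < k \<Longrightarrow> \<sigma> (\<sigma> (ls!i)) = \<alpha> (ls!(i-1))"
  using vtx[of i] by metis
lemma vB: "1 \<le> i \<Longrightarrow> i < k \<Longrightarrow> \<sigma> (ls!i) \<noteq> \<alpha> (ls!(i-1))"
  using vtx[of i] by (metis distinct_length_2_or_more)
lemma vC: "1 \<le> i \<Longrightarrow> i < k \<Longrightarrow> \<sigma> (\<sigma> (ls!i)) \<noteq> \<sigma> (ls!i)"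
  using vA vB by metis
lemma vD: "1 \<le> i \<Longrightarrow> i < k \<Longrightarrow> \<sigma> (\<alpha> (ls!(i-1))) \<noteq> \<alpha> (ls!(i-1))"
  using vtx[of i] by (metis distinct_length_2_or_more)
lemma vE: "1 \<le> i \<Longrightarrow> i < k \<Longrightarrow> \<sigma> (\<alpha> (\<sigma> (ls ! i))) = \<alpha> (\<sigma> (ls ! i))"
  using vtx[of i] by blast

lemma distls: "distinct ls"
  unfolding distinct_conv_nth
proof (intro allI impI)
  fix i j assume "i < k" "j < k" "i \<noteq> j"
  thus "ls!i \<noteq> ls!j" using sepm[of i j 0 0] by auto
qed

lemma S_eq: "S = {p, q} \<union> (\<lambda>i. \<sigma> (ls!i)) ` {1..<k}"
  unfolding sprout_darts_def by auto

lemma SD: "S \<subseteq> D" unfolding S_eq using pD qD sD lsnD by auto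

lemma leafS: "s \<in> S \<Longrightarrow> \<sigma> (\<alpha> s) = \<alpha> s"
  unfolding S_eq using u(6,7) vE by auto


lemma SI_notp: "1 \<le> i \<Longrightarrow> i < k \<Longrightarrow> \<sigma> (ls!i) \<noteq> p"
proof
  assume "1 \<le> i" "i < k" "\<sigma> (ls!i) = p"
  hence "(\<sigma>^^Suc 0) (ls!0) = (\<sigma>^^Suc 0) (ls!i)" using pS by simp
  thus False using sepm[of 0 i "Suc 0" "Suc 0"] \<open>1 \<le> i\<close> \<open>i < k\<close> by linarith
qed

lemma SI_notq: "1 \<le> i \<Longrightarrow> i < k \<Longrightarrow> \<sigma> (ls!i) \<noteq> q"
proof
  assume "1 \<le> i" "i < k" "\<sigma> (ls!i) = q"
  hence "(\<sigma>^^Suc (Suc 0)) (ls!0) = (\<sigma>^^Suc 0) (ls!i)" using qS by simp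
  thus False using sepm[of 0 i "Suc (Suc 0)" "Suc 0"] \<open>1 \<le> i\<close> \<open>i < k\<close> by linarith
qed

lemma pq: "p \<noteq> q" using u(1) by simp

lemma cardS: "card S = k + 1"
proof -
  let ?SI = "(\<lambda>i. \<sigma> (ls!i)) ` {1..<k}"
  have inj: "inj_on (\<lambda>i. \<sigma> (ls!i)) {1..<k}"
  proof (rule inj_onI)
    fix i j assume "i \<in> {1..<k}" "j \<in> {1..<k}" "\<sigma> (ls!i) = \<sigma> (ls!j)"
    thus "i = j" using sepm[of i j "Suc 0" "Suc 0"] by simp
  qed
  have c1: "card ?SI = k - 1" using card_image[OF inj] by simp
  have np: "p \<notin> ?SI"
  proof
    assume "p \<in> ?SI" then obtain i where "i \<in> {1..<k}" "p = \<sigma> (ls!i)" by blast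
    thus False using SI_notp[of i] by auto
  qed
  have nq: "q \<notin> ?SI"
  proof
    assume "q \<in> ?SI" then obtain i where "i \<in> {1..<k}" "q = \<sigma> (ls!i)" by blast
    thus False using SI_notq[of i] by auto
  qed
  have d: "{p, q} \<inter> ?SI = {}" using np nq by auto
  have "card S = card {p, q} + card ?SI" unfolding S_eq by (rule card_Un_disjoint) (use d in auto)
  thus ?thesis using c1 pq kpos by simp
qed

lemma card_als: "card (\<alpha> ` set ls) = k"
proof -
  have "inj_on \<alpha> (set ls)" using bja lsD unfolding bij_betw_def by (metis inj_on_subset)
  thus ?thesis using distls by (simp add: card_image distinct_card)
qed

lemma als_cases:
  assumes "j < k"
  shows "(j = k - 1 \<and> \<alpha> (ls!j) = \<sigma> (\<sigma> (\<sigma> (ls!0)))) \<or> (j + 1 < k \<and> \<alpha> (ls!j) = \<sigma> (\<sigma> (ls!(j+1))))"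
proof (cases "j = k - 1")
  case True then show ?thesis using lastS by simp
next
  case False
  hence "j + 1 < k" using assms by simp
  then show ?thesis using vA[of "j+1"] by simp
qed

lemma S_cases:
  assumes "x \<in> S"
  obtains "x = p" | "x = q" | i where "1 \<le> i" "i < k" "x = \<sigma> (ls!i)"
  using assms unfolding S_eq by auto

lemma disj1: "S \<inter> \<alpha> ` set ls = {}"
proof -
  have False if j: "j < k" and xS: "\<alpha> (ls!j) \<in> S" for j
  proof -
    from als_cases[OF j] show False
    proof
      assume h: "j = k - 1 \<and> \<alpha> (ls!j) = \<sigma> (\<sigma> (\<sigma> (ls!0)))"
      hence hj: "j = k - 1" and he: "\<alpha> (ls!j) = \<sigma> (\<sigma> (\<sigma> (ls!0)))" by auto
      from xS show False
      proof (cases rule: S_cases)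
        case 1 then show ?thesis using u(1) h last0 by simp
      next
        case 2 then show ?thesis using u(1) h last0 by simp
      next
        case (3 i)
        hence "(\<sigma>^^Suc 0) (ls!i) = (\<sigma>^^Suc (Suc (Suc 0))) (ls!0)" using he by simp
        thus False using sepm[of i 0 "Suc 0" "Suc (Suc (Suc 0))"] 3 kpos by linarith
      qed
    next
      assume h: "j + 1 < k \<and> \<alpha> (ls!j) = \<sigma> (\<sigma> (ls!(j+1)))"
      from xS show False
      proof (cases rule: S_cases)
        case 1
        hence "(\<sigma>^^Suc 0) (ls!0) = (\<sigma>^^Suc (Suc 0)) (ls!(j+1))" using h pS by simp
        thus False using sepm[of 0 "j+1" "Suc 0" "Suc (Suc 0)"] h ne by simp
      next
        case 2
        hence "(\<sigma>^^Suc (Suc 0)) (ls!0) = (\<sigma>^^Suc (Suc 0)) (ls!(j+1))" using h qS by simp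
        thus False using sepm[of 0 "j+1" "Suc (Suc 0)" "Suc (Suc 0)"] h ne by simp
      next
        case (3 i)
        show False
        proof (cases "i = j + 1")
          case True
          then show False using vB[of i] 3 h by simp
        next
          case False
          have "(\<sigma>^^Suc 0) (ls!i) = (\<sigma>^^Suc (Suc 0)) (ls!(j+1))" using h 3 by simp
          thus False using sepm[of i "j+1" "Suc 0" "Suc (Suc 0)"] 3 h False by simp
        qed
      qed
    qed
  qed
  thus ?thesis by (auto simp: in_set_conv_nth)
qed

lemma nonleaf: "d \<in> S \<union> \<alpha> ` set ls \<Longrightarrow> \<sigma> d \<noteq> d"
proof -
  assume "d \<in> S \<union> \<alpha> ` set ls"
  then consider "d \<in> S" | j where "j < k" "d = \<alpha> (ls!j)" by (auto simp: in_set_conv_nth)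
  then show "\<sigma> d \<noteq> d"
  proof cases
    case 1
    then show ?thesis
    proof (cases rule: S_cases)
      case 1 then show ?thesis using u(1,4) by auto
    next
      case 2 then show ?thesis using u(1,5) by auto
    next
      case (3 i) then show ?thesis using vC[of i] by simp
    qed
  next
    case (2 j)
    show ?thesis
    proof (cases "j = k - 1")
      case True then show ?thesis using 2 u(1,2) last0 by auto
    next
      case False
      hence "1 \<le> j + 1" "j + 1 < k" using 2 by auto
      then show ?thesis using vD[of "j+1"] 2 by simp
    qed
  qed
qed

definition "Out = \<alpha> ` S \<union> S \<union> \<alpha> ` set ls"

lemma card_Out: "card Out = 3 * k + 2"
proof -
  have fS: "finite S" using SD fin finite_subset by blast
  have caS: "card (\<alpha> ` S) = card S"
  proof -
    have "inj_on \<alpha> S" using bja SD unfolding bij_betw_def by (metis inj_on_subset)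
    thus ?thesis by (simp add: card_image)
  qed
  have d2: "\<alpha> ` S \<inter> (S \<union> \<alpha> ` set ls) = {}"
  proof -
    have "\<sigma> (\<alpha> s) = \<alpha> s" if "s \<in> S" for s using leafS that by blast
    thus ?thesis using nonleaf by blast
  qed
  have "card (S \<union> \<alpha> ` set ls) = card S + card (\<alpha> ` set ls)"
    by (rule card_Un_disjoint) (use fS disj1 in auto)
  moreover have "card (\<alpha> ` S \<union> (S \<union> \<alpha> ` set ls)) = card (\<alpha> ` S) + card (S \<union> \<alpha> ` set ls)"
    by (rule card_Un_disjoint) (use fS d2 in auto)
  ultimately show ?thesis unfolding Out_def using caS cardS card_als
    by (simp add: Un_assoc)
qed


definition "phi = \<sigma> \<circ> \<alpha>"
lemma phi_ap: "phi x = \<sigma> (\<alpha> x)" unfolding phi_def by simp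
lemma bjp: "bij_betw phi D D" unfolding phi_def using bij_betw_trans[OF bja bjs] .

lemma lastin: "\<alpha> (last ls) \<in> \<alpha> ` set ls" using ne by simp
lemma nthin: "j < k \<Longrightarrow> \<alpha> (ls!j) \<in> \<alpha> ` set ls" by simp

lemma OutI1: "s \<in> S \<Longrightarrow> \<alpha> s \<in> Out" unfolding Out_def by blast
lemma OutI2: "s \<in> S \<Longrightarrow> s \<in> Out" unfolding Out_def by blast
lemma OutI3: "j < k \<Longrightarrow> \<alpha> (ls!j) \<in> Out" unfolding Out_def using nthin by blast
lemma pS': "p \<in> S" "q \<in> S" unfolding sprout_darts_def by auto
lemma siS: "1 \<le> i \<Longrightarrow> i < k \<Longrightarrow> \<sigma> (ls!i) \<in> S" unfolding sprout_darts_def by auto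

lemma Out_cases:
  assumes "x \<in> Out"
  obtains s where "s \<in> S" "x = \<alpha> s" | "x \<in> S" | j where "j < k" "x = \<alpha> (ls!j)"
proof -
  have "x \<in> \<alpha> ` S \<or> x \<in> S \<or> x \<in> \<alpha> ` set ls" using assms unfolding Out_def by blast
  moreover have "x \<in> \<alpha> ` set ls \<Longrightarrow> \<exists>j<k. x = \<alpha> (ls!j)"
  proof -
    assume "x \<in> \<alpha> ` set ls"
    then obtain y where "y \<in> set ls" "x = \<alpha> y" by blast
    thus ?thesis unfolding in_set_conv_nth by blast
  qed
  ultimately show ?thesis using that by blast
qed

lemma phiO: "x \<in> Out \<Longrightarrow> \<sigma> (\<alpha> x) \<in> Out"
proof -
  assume "x \<in> Out"
  then show "\<sigma> (\<alpha> x) \<in> Out"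
  proof (cases rule: Out_cases)
    case (1 s)
    have sD': "s \<in> D" using 1 SD by blast
    hence e: "\<sigma> (\<alpha> x) = \<sigma> s" using 1 aa by simp
    from 1(1) show ?thesis
    proof (cases rule: S_cases)
      case 1 then show ?thesis using e u(4) OutI2 pS' by simp
    next
      case 2 then show ?thesis using e u(5) last0 OutI3[of "k-1"] kpos by simp
    next
      case (3 i)
      hence "\<sigma> (\<alpha> x) = \<alpha> (ls!(i-1))" using e vA by simp
      moreover have "i - 1 < k" using 3 by simp
      ultimately show ?thesis using OutI3 by simp
    qed
  next
    case 2
    then show ?thesis using leafS OutI1 by simp
  next
    case (3 j)
    hence e: "\<sigma> (\<alpha> x) = \<sigma> (ls!j)" using aa lsnD by simp
    show ?thesis
    proof (cases "j = 0")
      case True then show ?thesis using e pS OutI2 pS' by simp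
    next
      case False
      hence "\<sigma> (ls!j) \<in> S" using 3 siS by simp
      then show ?thesis using e OutI2 by simp
    qed
  qed
qed

lemma orb_sub_Out: "orb phi p \<subseteq> Out"
proof
  fix x assume "x \<in> orb phi p"
  then obtain n where n: "x = (phi^^n) p" unfolding orb_mem by blast
  have "(phi^^n) p \<in> Out" for n
  proof (induction n)
    case 0 then show ?case unfolding Out_def S_eq by simp
  next
    case (Suc n) then show ?case using phiO by (simp add: phi_ap)
  qed
  thus "x \<in> Out" using n by simp
qed

lemma Out_sub_orb: "Out \<subseteq> orb phi p"
proof -
  let ?Ob = "orb phi p"
  have st: "\<sigma> (\<alpha> x) \<in> ?Ob" if "x \<in> ?Ob" for x using orb_step[OF that] by (simp add: phi_ap)
  have pO: "p \<in> ?Ob" by (rule orb_self)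
  have apO: "\<alpha> p \<in> ?Ob" using st[OF pO] u(6) by simp
  have qO: "q \<in> ?Ob" using st[OF apO] aa[OF pD] u(4) by simp
  have aqO: "\<alpha> q \<in> ?Ob" using st[OF qO] u(7) by simp
  have alO: "\<alpha> (ls!(k-1)) \<in> ?Ob" using st[OF aqO] aa[OF qD] u(5) last0 by simp
  have down: "m < k \<longrightarrow> \<alpha> (ls!(k-1-m)) \<in> ?Ob" for m
  proof (induction m)
    case 0 then show ?case using alO by simp
  next
    case (Suc m)
    show ?case
    proof
      assume m: "Suc m < k"
      define j where "j = k - 1 - m"
      have j: "1 \<le> j" "j < k" using m unfolding j_def by auto
      have a: "\<alpha> (ls!j) \<in> ?Ob" using Suc m unfolding j_def by simp
      have b: "\<sigma> (ls!j) \<in> ?Ob" using st[OF a] aa lsnD[OF j(2)] by simp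
      have c: "\<alpha> (\<sigma> (ls!j)) \<in> ?Ob" using st[OF b] vE[OF j] by simp
      have "\<sigma> (\<sigma> (ls!j)) \<in> ?Ob" using st[OF c] aa sD lsnD[OF j(2)] by simp
      hence "\<alpha> (ls!(j-1)) \<in> ?Ob" using vA[OF j] by simp
      moreover have "j - 1 = k - 1 - Suc m" unfolding j_def by simp
      ultimately show "\<alpha> (ls!(k-1-Suc m)) \<in> ?Ob" by simp
    qed
  qed
  have all: "\<alpha> (ls!j) \<in> ?Ob" if "j < k" for j
  proof -
    have "k - 1 - (k - 1 - j) = j" using that by simp
    thus ?thesis using down[of "k-1-j"] that by simp
  qed
  have si: "\<sigma> (ls!i) \<in> ?Ob" if "i < k" for i using st[OF all[OF that]] aa lsnD[OF that] by simp
  have asi: "\<alpha> (\<sigma> (ls!i)) \<in> ?Ob" if "1 \<le> i" "i < k" for i using st[OF si[OF that(2)]] vE[OF that] by simp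
  show ?thesis
  proof
    fix x assume "x \<in> Out"
    then show "x \<in> ?Ob"
    proof (cases rule: Out_cases)
      case (1 s)
      from 1(1) show ?thesis
        by (cases rule: S_cases) (use 1 apO aqO asi in simp_all)
    next
      case 2
      then show ?thesis
        by (cases rule: S_cases) (use pO qO si in simp_all)
    next
      case (3 j) then show ?thesis using all by simp
    qed
  qed
qed

lemma Out_orb: "Out = orb phi p" using Out_sub_orb orb_sub_Out by (rule equalityI)


abbreviation "FF \<equiv> map_faces D \<alpha> \<sigma>"
abbreviation "IN \<equiv> faces_in_R D \<alpha> \<sigma> ls p q"

lemma FF_eq: "FF = orb phi ` D" unfolding map_faces_def phi_def ..

lemma Out_face: "Out \<in> FF" unfolding FF_eq Out_orb using pD by blast

lemma pOut: "p \<in> Out" unfolding Out_def using pS' by blast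

lemma IN_eq: "IN = FF - {Out}"
proof
  show "IN \<subseteq> FF - {Out}"
  proof
    fix F assume "F \<in> IN"
    hence F: "F \<in> FF" "F \<inter> S = {}" unfolding faces_in_R_def by auto
    have "F \<noteq> Out" using F(2) pOut pS' by blast
    thus "F \<in> FF - {Out}" using F by blast
  qed
  show "FF - {Out} \<subseteq> IN"
  proof
    fix F assume F: "F \<in> FF - {Out}"
    then obtain d where d: "d \<in> D" "F = orb phi d" unfolding FF_eq by blast
    have "F \<inter> S = {}"
    proof (rule ccontr)
      assume "F \<inter> S \<noteq> {}"
      then obtain s where s: "s \<in> F" "s \<in> S" by blast
      have "orb phi s = F" using orb_eq[OF fin bjp d(1)] s(1) d(2) by blast
      moreover have "s \<in> orb phi p" using s(2) Out_orb unfolding Out_def by blast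
      hence "orb phi s = Out" using orb_eq[OF fin bjp pD] Out_orb by blast
      ultimately show False using F by blast
    qed
    thus "F \<in> IN" using F unfolding faces_in_R_def by blast
  qed
qed

lemma finFF: "finite FF" unfolding FF_eq using fin by simp

lemma faces_count: "(\<Sum>F\<in>IN. card F) + (3 * k + 2) = card D" "card FF = card IN + 1"
proof -
  have "(\<Sum>F\<in>FF. card F) = card D" unfolding FF_eq by (rule orb_sum_card[OF fin bjp])
  moreover have "(\<Sum>F\<in>FF. card F) = card Out + (\<Sum>F\<in>FF - {Out}. card F)"
    by (rule sum.remove[OF finFF Out_face])
  ultimately show "(\<Sum>F\<in>IN. card F) + (3 * k + 2) = card D" using IN_eq card_Out by simp
  show "card FF = card IN + 1" using IN_eq card_Diff_singleton[OF Out_face] finFF Out_face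
    by (metis Suc_eq_plus1 card_Suc_Diff1)
qed

lemma orb_alpha: "d \<in> D \<Longrightarrow> orb \<alpha> d = {d, \<alpha> d}"
proof -
  assume d: "d \<in> D"
  have "(\<alpha>^^n) d \<in> {d, \<alpha> d}" for n
  proof (induction n)
    case 0 then show ?case by simp
  next
    case (Suc n) then show ?case using aa[OF d] by auto
  qed
  hence "orb \<alpha> d \<subseteq> {d, \<alpha> d}" unfolding orb_def by blast
  moreover have "d \<in> orb \<alpha> d" "\<alpha> d \<in> orb \<alpha> d" using orb_self orb_step orb_self by fastforce+
  ultimately show ?thesis by blast
qed

lemma edges_count: "2 * card (map_edges D \<alpha> \<sigma>) = card D"
proof -
  have "(\<Sum>e\<in>orb \<alpha> ` D. card e) = card D" by (rule orb_sum_card[OF fin bja])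
  moreover have "(\<Sum>e\<in>orb \<alpha> ` D. card e) = (\<Sum>e\<in>orb \<alpha> ` D. 2)"
  proof (rule sum.cong[OF refl])
    fix e assume "e \<in> orb \<alpha> ` D"
    then obtain d where d: "d \<in> D" "e = orb \<alpha> d" by blast
    have "\<alpha> d \<noteq> d" using anf[OF d(1)] .
    moreover have "e = {d, \<alpha> d}" using orb_alpha[OF d(1)] d(2) by simp
    ultimately show "card e = 2" by simp
  qed
  ultimately show ?thesis unfolding map_edges_def by simp
qed

lemma orb_fix: "\<sigma> d = d \<Longrightarrow> orb \<sigma> d = {d}"
proof -
  assume h: "\<sigma> d = d"
  have "(\<sigma>^^n) d = d" for n by (induction n) (simp_all add: h)
  thus ?thesis unfolding orb_def by auto
qed

lemma L0_eq: "{d\<in>D. \<sigma> d = d} = \<alpha> ` S"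
proof
  show "{d\<in>D. \<sigma> d = d} \<subseteq> \<alpha> ` S"
  proof
    fix d assume "d \<in> {d\<in>D. \<sigma> d = d}"
    hence d: "d \<in> D" "\<sigma> d = d" by auto
    hence "\<alpha> d \<in> S" using leaf by blast
    moreover have "d = \<alpha> (\<alpha> d)" using aa[OF d(1)] by simp
    ultimately show "d \<in> \<alpha> ` S" by blast
  qed
  show "\<alpha> ` S \<subseteq> {d\<in>D. \<sigma> d = d}" using leafS SD aD by auto
qed

lemma cardL0: "card {d\<in>D. \<sigma> d = d} = k + 1"
proof -
  have "inj_on \<alpha> S" using bja SD unfolding bij_betw_def by (metis inj_on_subset)
  thus ?thesis unfolding L0_eq using cardS by (simp add: card_image)
qed

lemma vert_count: "4 * card (map_vertices D \<alpha> \<sigma>) = card D + 3 * (k + 1)"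
proof -
  let ?VV = "orb \<sigma> ` D"
  let ?L0 = "{d\<in>D. \<sigma> d = d}"
  let ?V1 = "{v\<in>?VV. card v = 1}"
  have finV: "finite ?VV" using fin by simp
  have V1eq: "?V1 = orb \<sigma> ` ?L0"
  proof
    show "?V1 \<subseteq> orb \<sigma> ` ?L0"
    proof
      fix v assume "v \<in> ?V1"
      then obtain d where d: "d \<in> D" "v = orb \<sigma> d" "card v = 1" by blast
      then obtain x where x: "v = {x}" using card_1_singletonE by blast
      have "d \<in> v" "\<sigma> d \<in> v" using d(2) orb_self orb_step by fastforce+
      hence "\<sigma> d = d" using x by simp
      thus "v \<in> orb \<sigma> ` ?L0" using d by blast
    qed
    show "orb \<sigma> ` ?L0 \<subseteq> ?V1" using orb_fix by auto
  qed
  have injL: "inj_on (orb \<sigma>) ?L0"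
  proof (rule inj_onI)
    fix a b assume "a \<in> ?L0" "b \<in> ?L0" "orb \<sigma> a = orb \<sigma> b"
    thus "a = b" using orb_fix by auto
  qed
  have cV1: "card ?V1 = k + 1" using V1eq card_image[OF injL] cardL0 by simp
  have V4: "card v = 4" if "v \<in> ?VV - ?V1" for v using that deg by auto
  have t1: "(\<Sum>v\<in>?VV. card v) = card D" by (rule orb_sum_card[OF fin bjs])
  have t2: "(\<Sum>v\<in>?VV. card v) = (\<Sum>v\<in>?VV - ?V1. card v) + (\<Sum>v\<in>?V1. card v)"
    by (rule sum.subset_diff) (use finV in auto)
  have t3: "(\<Sum>v\<in>?VV - ?V1. card v) = 4 * card (?VV - ?V1)"
  proof -
    have "(\<Sum>v\<in>?VV - ?V1. card v) = (\<Sum>v\<in>?VV - ?V1. 4)" by (rule sum.cong[OF refl]) (rule V4)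
    thus ?thesis by simp
  qed
  have t4: "(\<Sum>v\<in>?V1. card v) = card ?V1" by simp
  have t5: "card ?VV = card (?VV - ?V1) + card ?V1"
    using card_Diff_subset[of ?V1 ?VV] card_mono[of ?VV ?V1] finV finite_subset[of ?V1 ?VV] by fastforce
  have "card D = (\<Sum>v\<in>?VV - ?V1. card v) + card ?V1" using t1 t2 t4 by simp
  hence "card D = 4 * card (?VV - ?V1) + card ?V1" using t3 by simp
  hence "4 * card ?VV = card D + 3 * (k + 1)"
    using arith_aux2[of "card D" "4 * card (?VV - ?V1)" "card ?V1" "card (?VV - ?V1)" "card ?VV" k] t5 cV1 by simp
  thus ?thesis unfolding map_vertices_def .
qed

lemma inner_sum: "(\<Sum>F\<in>IN. 4 - real (card F)) = 3"
proof -
  have finIN: "finite IN" using IN_eq finFF by simp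
  have "(\<Sum>F\<in>IN. 4 - real (card F)) = 4 * real (card IN) - real (\<Sum>F\<in>IN. card F)"
    by (simp add: sum_subtractf)
  moreover have e: "real (card (map_vertices D \<alpha> \<sigma>)) - real (card (map_edges D \<alpha> \<sigma>)) + real (card FF) = 2"
    using arg_cong[OF euler, of real_of_int] by simp
  moreover have "real (\<Sum>F\<in>IN. card F) + (3 * real k + 2) = real (card D)"
    using arg_cong[OF faces_count(1), of real] by simp
  moreover have "real (card FF) = real (card IN) + 1" using faces_count(2) by simp
  moreover have "2 * real (card (map_edges D \<alpha> \<sigma>)) = real (card D)"
    using arg_cong[OF edges_count, of real] by simp
  moreover have "4 * real (card (map_vertices D \<alpha> \<sigma>)) = real (card D) + 3 * (real k + 1)"
    using arg_cong[OF vert_count, of real] by simp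
  ultimately show ?thesis by (rule arith_aux)
qed

lemma IN_bounds: "F \<in> IN \<Longrightarrow> 1 \<le> card F \<and> card F \<le> card D"
proof -
  assume "F \<in> IN"
  hence "F \<in> FF" using IN_eq by blast
  then obtain d where d: "d \<in> D" "F = orb phi d" unfolding FF_eq by blast
  have sub: "F \<subseteq> D" using orb_subD[OF bjp d(1)] d(2) by simp
  have fF: "finite F" using finite_subset[OF sub fin] .
  have "d \<in> F" using d(2) orb_self by simp
  hence "card F \<noteq> 0" using fF by auto
  moreover have "card F \<le> card D" using card_mono[OF fin sub] .
  ultimately show ?thesis by simp
qed

lemma finIN: "finite IN" using IN_eq finFF by simp

end

theorem theorem5p11:
  fixes D :: "'d set" and \<alpha> \<sigma> :: "'d \<Rightarrow> 'd" and ls :: "'d list" and p q :: 'd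
  assumes "loop_tangle_map D \<alpha> \<sigma> ls p q"
  defines "f \<equiv> \<lambda>N. real (nsided_faces D \<alpha> \<sigma> ls p q N)"
  shows "3 * f 1 + 2 * f 2 + f 3 = 3 + (\<Sum>n. real (n + 1) * f (n + 1 + 4))"
proof -
  interpret LT D \<alpha> \<sigma> ls p q by (rule LT.intro[OF assms(1)])
  have "f = (\<lambda>N. real (card {F \<in> faces_in_R D \<alpha> \<sigma> ls p q. card F = N}))"
    unfolding f_def nsided_faces_def ..
  thus ?thesis using final_conv[OF finIN IN_bounds inner_sum] by simp
qed

end
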